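(* Let $E=\mathbb{Q}(i,\sqrt5)$, let $\tau=(1+\sqrt5)/2$, and let $\sigma$ be the automorphism of $E$ with $\sigma(i)=i$ and $\sigma(\sqrt5)=-\sqrt5$. For a real number $N\ge 1$ let $\mathbf{L}(N)$ be the set of numbers $x=(a+bi)+(c+di)\tau\in E$ with $a,b,c,d\in\mathbb{Z}$ and $|a|,|b|,|c|,|d|\le N$. For $x_1,x_2\in E$ put $$X(x_1,x_2)=\begin{pmatrix} x_1 & \sigma(x_1)\\ i\,x_2 & \sigma(x_2)\end{pmatrix},$$ and define the decay function $$D(N_1,N_2)=\min_{x_1\in\mathbf{L}(N_1)\setminus\{0\},\ x_2\in\mathbf{L}(N_2)\setminus\{0\}}\left|\det X(x_1,x_2)\right|.$$ Then there exists a constant $K>0$ such that for all sufficiently large $N_1,N_2$, $$D(N_1,N_2)\ge\frac{K}{N_1N_2}.$$ In particular, $D(N,N)\ge K/N^2$ for all sufficiently large $N$.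
   Context: This is the two-user single-antenna Badr–Belfiore multiuser MIMO code: user 1 transmits the row $(x_1,\sigma(x_1))$ and user 2 the row $(i x_2,\sigma(x_2))$; the determinant $\det X(x_1,x_2)$ is nonzero whenever $x_1\neq 0$ and $x_2\neq0$, so $D$ takes positive values. *)

theory Defs
  imports Complex_Main
begin

definition gauss_rat :: "complex set" where
  "gauss_rat = {Complex (of_rat p) (of_rat q) | p q. True}"

definition E_field :: "complex set" where
  "E_field = {p + complex_of_real (sqrt 5) * q | p q. p \<in> gauss_rat \<and> q \<in> gauss_rat}"

definition sigma :: "complex \<Rightarrow> complex" where
  "sigma z = (THE w. \<exists>p q. p \<in> gauss_rat \<and> q \<in> gauss_rat \<and>
                 z = p + complex_of_real (sqrt 5) * q \<and> w = p - complex_of_real (sqrt 5) * q)"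

definition tau :: real where
  "tau = (1 + sqrt 5) / 2"

definition Lset :: "real \<Rightarrow> complex set" where
  "Lset N = {(of_int a + \<i> * of_int b) + (of_int c + \<i> * of_int d) * complex_of_real tau
             | a b c d :: int. \<bar>real_of_int a\<bar> \<le> N \<and> \<bar>real_of_int b\<bar> \<le> N
                 \<and> \<bar>real_of_int c\<bar> \<le> N \<and> \<bar>real_of_int d\<bar> \<le> N}"

text \<open>Determinant of X(x1,x2) = [[x1, sigma x1], [i x2, sigma x2]].\<close>
definition detX :: "complex \<Rightarrow> complex \<Rightarrow> complex" where
  "detX x1 x2 = x1 * sigma x2 - \<i> * x2 * sigma x1"

definition decay :: "real \<Rightarrow> real \<Rightarrow> real" where
  "decay N1 N2 = Min {cmod (detX x1 x2) | x1 x2.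
                       x1 \<in> Lset N1 - {0} \<and> x2 \<in> Lset N2 - {0}}"

end

theory Submission imports Defs "HOL-Computational_Algebra.Primes" begin

lemma sqrt5_irr: "sqrt 5 \<notin> \<rat>"
proof
  assume "sqrt 5 \<in> \<rat>"
  then obtain m n :: nat
    where n: "n \<noteq> 0" and sq: "\<bar>sqrt 5\<bar> = m / n" and cop: "coprime m n"
    by (rule Rats_abs_nat_div_natE)
  have "real m = sqrt 5 * n" using n sq by (simp add: field_simps)
  then have "real (m^2) = (sqrt 5)^2 * real (n^2)" by (simp add: power_mult_distrib)
  then have eq: "m^2 = 5 * n^2" by (simp del: of_nat_power add: of_nat_eq_iff[symmetric])
  have p: "prime (5::nat)" by simp
  have "5 dvd m" using eq p prime_dvd_power by (metis dvd_triv_left)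
  then obtain k where "m = 5 * k" ..
  with eq have "n^2 = 5 * k^2" by (simp add: power2_eq_square)
  then have "5 dvd n" using p prime_dvd_power by (metis dvd_triv_left)
  with \<open>5 dvd m\<close> have "5 dvd gcd m n" by simp
  with cop show False by simp
qed

lemma irr_rat: assumes "m \<in> \<rat>" "n \<in> \<rat>" "m + n * sqrt 5 = 0" shows "m = 0 \<and> n = 0"
proof (cases "n = 0")
  case True thus ?thesis using assms by simp
next
  case False
  then have "sqrt 5 = - m / n" using assms(3) by (simp add: field_simps)
  then have "sqrt 5 \<in> \<rat>" using assms by simp
  thus ?thesis using sqrt5_irr by simp
qed

abbreviation rr :: complex where "rr \<equiv> complex_of_real (sqrt 5)"

lemma irr_cx: assumes "Re u \<in> \<rat>" "Im u \<in> \<rat>" "Re v \<in> \<rat>" "Im v \<in> \<rat>" "u + v * rr = 0"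
  shows "u = 0 \<and> v = 0"
proof -
  have "Re u + Re v * sqrt 5 = 0" "Im u + Im v * sqrt 5 = 0"
    using arg_cong[OF assms(5), of Re] arg_cong[OF assms(5), of Im] by simp_all
  then show ?thesis using irr_rat assms by (metis complex_eqI zero_complex.sel)
qed

lemma irr_cx2: assumes "Re u \<in> \<rat>" "Im u \<in> \<rat>" "Re v \<in> \<rat>" "Im v \<in> \<rat>" "u + \<i> * rr * v = 0"
  shows "u = 0 \<and> v = 0"
proof -
  have "Re u + (- Im v) * sqrt 5 = 0" "Im u + Re v * sqrt 5 = 0"
    using arg_cong[OF assms(5), of Re] arg_cong[OF assms(5), of Im] by (simp_all add: algebra_simps)
  then have "Re u = 0" "Im v = 0" "Im u = 0" "Re v = 0" using irr_rat assms by (metis Rats_minus_iff neg_equal_0_iff_equal)+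
  then show ?thesis by (simp add: complex_eqI)
qed

lemma gauss_rat_iff: "z \<in> gauss_rat \<longleftrightarrow> Re z \<in> \<rat> \<and> Im z \<in> \<rat>"
proof
  assume "z \<in> gauss_rat" thus "Re z \<in> \<rat> \<and> Im z \<in> \<rat>" by (auto simp: gauss_rat_def)
next
  assume "Re z \<in> \<rat> \<and> Im z \<in> \<rat>"
  then obtain p q where "Re z = of_rat p" "Im z = of_rat q" by (auto elim!: Rats_cases)
  then have "z = Complex (of_rat p) (of_rat q)" by (simp add: complex_eqI)
  thus "z \<in> gauss_rat" by (auto simp: gauss_rat_def)
qed

lemma sigma_eq: assumes "p \<in> gauss_rat" "q \<in> gauss_rat"
  shows "sigma (p + rr * q) = p - rr * q"
  unfolding sigma_def
proof (rule the_equality)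
  show "\<exists>pa qa. pa \<in> gauss_rat \<and> qa \<in> gauss_rat \<and> p + rr * q = pa + rr * qa \<and> p - rr * q = pa - rr * qa"
    using assms by blast
next
  fix w assume "\<exists>pa qa. pa \<in> gauss_rat \<and> qa \<in> gauss_rat \<and> p + rr * q = pa + rr * qa \<and> w = pa - rr * qa"
  then obtain pa qa where h: "pa \<in> gauss_rat" "qa \<in> gauss_rat" "p + rr * q = pa + rr * qa" "w = pa - rr * qa" by blast
  have "(p - pa) + (q - qa) * rr = 0" using h(3) by (simp add: algebra_simps)
  then have "p - pa = 0 \<and> q - qa = 0" using assms h(1,2) by (intro irr_cx) (auto simp: gauss_rat_iff)
  thus "w = p - rr * q" using h by simp
qed

definition Zi :: "complex \<Rightarrow> bool" where "Zi z \<longleftrightarrow> Re z \<in> \<int> \<and> Im z \<in> \<int>"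

lemma Zi_add: "Zi a \<Longrightarrow> Zi b \<Longrightarrow> Zi (a + b)" and Zi_diff: "Zi a \<Longrightarrow> Zi b \<Longrightarrow> Zi (a - b)"
  and Zi_mult: "Zi a \<Longrightarrow> Zi b \<Longrightarrow> Zi (a * b)" and Zi_i: "Zi \<i>" and Zi_num: "Zi (numeral n)"
  and Zi_cx: "Zi (Complex (of_int x) (of_int y))"
  by (auto simp: Zi_def)

lemma Zi_rat: "Zi a \<Longrightarrow> Re a \<in> \<rat> \<and> Im a \<in> \<rat>"
  by (auto simp: Zi_def Ints_subset_Rats[THEN subsetD])

lemma Zi_ge1: assumes "Zi z" "z \<noteq> 0" shows "1 \<le> cmod z"
proof (cases "Re z = 0")
  case True
  then have "Im z \<noteq> 0" using assms(2) complex_eqI by force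
  then have "1 \<le> \<bar>Im z\<bar>" using assms(1) Ints_nonzero_abs_ge1 Zi_def by blast
  thus ?thesis using abs_Im_le_cmod order_trans by blast
next
  case False
  then have "1 \<le> \<bar>Re z\<bar>" using assms(1) Ints_nonzero_abs_ge1 Zi_def by blast
  thus ?thesis using abs_Re_le_cmod order_trans by blast
qed

lemma cmod_gi: "cmod (of_int a + \<i> * of_int b) \<le> \<bar>real_of_int a\<bar> + \<bar>real_of_int b\<bar>"
proof -
  have "cmod (of_int a + \<i> * of_int b) \<le> cmod (of_int a) + cmod (\<i> * of_int b)" by (rule norm_triangle_ineq)
  also have "\<dots> = \<bar>real_of_int a\<bar> + \<bar>real_of_int b\<bar>" by (simp add: norm_mult)
  finally show ?thesis .
qed

lemma Lset_elem: assumes "x \<in> Lset N"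
  shows "\<exists>u v. Zi u \<and> Zi v \<and> 2*x = u + v*rr \<and> 2*sigma x = u - v*rr \<and> cmod (u + v*rr) \<le> 12*N \<and> cmod (u - v*rr) \<le> 12*N"
proof -
  obtain a b c d :: int where x: "x = (of_int a + \<i> * of_int b) + (of_int c + \<i> * of_int d) * complex_of_real tau"
    and h: "\<bar>real_of_int a\<bar> \<le> N" "\<bar>real_of_int b\<bar> \<le> N" "\<bar>real_of_int c\<bar> \<le> N" "\<bar>real_of_int d\<bar> \<le> N"
    using assms unfolding Lset_def by blast
  define al where "al = of_int a + \<i> * (of_int b :: complex)"
  define be where "be = of_int c + \<i> * (of_int d :: complex)"
  define u where "u = 2 * al + be"
  have x2: "x = (al + be/2) + rr * (be/2)" unfolding x al_def be_def tau_def
    by (simp add: field_simps)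
  have g1: "al + be/2 \<in> gauss_rat" "be/2 \<in> gauss_rat" unfolding gauss_rat_iff al_def be_def by auto
  have s: "sigma x = (al + be/2) - rr * (be/2)" unfolding x2 by (rule sigma_eq[OF g1])
  have zu: "Zi u" "Zi be" unfolding u_def al_def be_def Zi_def by auto
  have ca: "cmod al \<le> 2*N" using cmod_gi[of a b] h unfolding al_def by linarith
  have cb: "cmod be \<le> 2*N" using cmod_gi[of c d] h unfolding be_def by linarith
  have cu: "cmod u \<le> 6*N" unfolding u_def using norm_triangle_ineq[of "2*al" be] ca cb by (simp add: norm_mult)
  have N0: "0 \<le> N" using h(1) by linarith
  have s5: "sqrt 5 \<le> 3" by (rule real_le_lsqrt) auto
  have cv: "cmod (be * rr) \<le> 6*N"
  proof -
    have "cmod (be * rr) = cmod be * sqrt 5" by (simp add: norm_mult)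
    also have "\<dots> \<le> (2*N) * 3" using cb s5 N0 by (intro mult_mono) auto
    finally show ?thesis by simp
  qed
  have "cmod (u + be*rr) \<le> 12*N" using norm_triangle_ineq[of u "be*rr"] cu cv by linarith
  moreover have "cmod (u - be*rr) \<le> 12*N" using norm_triangle_ineq4[of u "be*rr"] cu cv by linarith
  moreover have "2*x = u + be*rr" unfolding x2 u_def by (simp add: algebra_simps)
  moreover have "2*sigma x = u - be*rr" unfolding s u_def by (simp add: algebra_simps)
  ultimately show ?thesis using zu by blast
qed

lemma id1: fixes A B j :: complex shows "(A - j*B)*(B - j*A) = -j*(A^2+B^2) + (1 + j*j)*A*B" by algebra
lemma id2: fixes P Q r :: complex shows "(P+Q*r)^2 + (P-Q*r)^2 = 2*P^2 + 2*Q^2*(r*r)" by algebra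
lemma id3: fixes P Q r j :: complex shows "(P + j*r*Q)*(P - j*r*Q) = P^2 - (j*j)*(r*r)*Q^2" by algebra
lemma id4: fixes r u1 v1 u2 v2 :: complex shows "(u1+v1*r)*(u2-v2*r) = (u1*u2 - (r*r)*v1*v2) + (v1*u2 - u1*v2)*r" by algebra

lemma rr2: "rr * rr = 5"
  unfolding of_real_mult[symmetric] by simp

lemma det_bound:
  assumes x1: "x1 \<in> Lset N1" "x1 \<noteq> 0" and x2: "x2 \<in> Lset N2" "x2 \<noteq> 0"
  shows "1 / (576 * N1 * N2) \<le> cmod (detX x1 x2)"
proof -
  obtain u1 v1 where h1: "Zi u1" "Zi v1" "2*x1 = u1 + v1*rr" "2*sigma x1 = u1 - v1*rr"
      "cmod (u1 + v1*rr) \<le> 12*N1" "cmod (u1 - v1*rr) \<le> 12*N1" using Lset_elem[OF x1(1)] by blast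
  obtain u2 v2 where h2: "Zi u2" "Zi v2" "2*x2 = u2 + v2*rr" "2*sigma x2 = u2 - v2*rr"
      "cmod (u2 + v2*rr) \<le> 12*N2" "cmod (u2 - v2*rr) \<le> 12*N2" using Lset_elem[OF x2(1)] by blast
  define P where "P = u1*u2 - 5*v1*v2"
  define Q where "Q = v1*u2 - u1*v2"
  have ZP: "Zi P" "Zi Q" unfolding P_def Q_def using h1 h2 by (simp_all add: Zi_mult Zi_diff Zi_num)
  define A where "A = (u1+v1*rr)*(u2-v2*rr)"
  define B where "B = (u2+v2*rr)*(u1-v1*rr)"
  have A: "A = P + Q*rr" unfolding A_def P_def Q_def id4 rr2 by simp
  have B: "B = P - Q*rr" unfolding B_def P_def Q_def id4 rr2 by (simp add: algebra_simps)
  have e1: "4 * detX x1 x2 = A - \<i> * B"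
  proof -
    have "4 * detX x1 x2 = (2*x1)*(2*sigma x2) - \<i>*(2*x2)*(2*sigma x1)" unfolding detX_def by (simp add: algebra_simps del: mult_2 mult_2_right)
    also have "\<dots> = A - \<i> * B" unfolding A_def B_def h1(3,4) h2(3,4) by (simp only: mult.assoc)
    finally show ?thesis .
  qed
  define G where "G = P^2 + 5*Q^2"
  have prod: "(A - \<i>*B) * (B - \<i>*A) = -2*\<i>*G"
  proof -
    have "(A - \<i>*B) * (B - \<i>*A) = -\<i>*(A^2+B^2) + (1 + \<i>*\<i>)*A*B" by (rule id1)
    also have "\<dots> = -\<i>*(A^2+B^2)" by simp
    also have "A^2+B^2 = 2*P^2 + 2*Q^2*(rr*rr)" unfolding A B by (rule id2)
    finally show ?thesis unfolding rr2 G_def by (simp add: algebra_simps)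
  qed
  have ZG: "Zi G" unfolding G_def power2_eq_square using ZP by (simp add: Zi_mult Zi_add Zi_num)
  have G0: "G \<noteq> 0"
  proof
    assume "G = 0"
    have "G = (P + \<i>*rr*Q)*(P - \<i>*rr*Q)" unfolding id3 rr2 G_def by simp
    then have "P + \<i>*rr*Q = 0 \<or> P + \<i>*rr*(-Q) = 0" using \<open>G = 0\<close> by simp
    then have PQ: "P = 0 \<and> Q = 0"
    proof
      assume "P + \<i>*rr*Q = 0" thus ?thesis using irr_cx2[of P Q] Zi_rat[OF ZP(1)] Zi_rat[OF ZP(2)] by simp
    next
      assume "P + \<i>*rr*(-Q) = 0"
      moreover have "Zi (-Q)" using ZP by (simp add: Zi_def)
      ultimately have "P = 0 \<and> -Q = 0" using irr_cx2[of P "-Q"] Zi_rat[OF ZP(1)] Zi_rat[of "-Q"] by simp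
      thus ?thesis by simp
    qed
    then have "A = 0" using A by simp
    then have "u1 + v1*rr = 0 \<or> u2 + (-v2)*rr = 0" unfolding A_def by simp
    then show False
    proof
      assume "u1 + v1*rr = 0" then show False using h1(3) x1(2) by simp
    next
      assume "u2 + (-v2)*rr = 0"
      moreover have "Zi (-v2)" using h2 by (simp add: Zi_def)
      ultimately have "u2 = 0 \<and> -v2 = 0" using irr_cx[of u2 "-v2"] Zi_rat[OF h2(1)] Zi_rat[of "-v2"] by simp
      then show False using h2(3) x2(2) by simp
    qed
  qed
  have G1: "1 \<le> cmod G" using Zi_ge1 ZG G0 by blast
  have N1: "0 \<le> N1" using h1(5) norm_ge_zero[of "u1+v1*rr"] by linarith
  have N2: "0 \<le> N2" using h2(5) norm_ge_zero[of "u2+v2*rr"] by linarith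
  have cB: "cmod B \<le> 144*N1*N2" unfolding B_def norm_mult using mult_mono[OF h2(5) h1(6)] N1 N2 by (simp add: mult_ac)
  have cA: "cmod A \<le> 144*N1*N2" unfolding A_def norm_mult using mult_mono[OF h1(5) h2(6)] N1 N2 by (simp add: mult_ac)
  have cD: "cmod (B - \<i>*A) \<le> 288*N1*N2"
    using norm_triangle_ineq4[of B "\<i>*A"] cA cB by (simp add: norm_mult)
  have "2 \<le> cmod ((A - \<i>*B) * (B - \<i>*A))" unfolding prod using G1 by (simp add: norm_mult)
  also have "\<dots> = 4 * cmod (detX x1 x2) * cmod (B - \<i>*A)" unfolding e1[symmetric] by (simp add: norm_mult)
  also have "\<dots> \<le> 4 * cmod (detX x1 x2) * (288*N1*N2)" by (intro mult_left_mono cD) simp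
  finally have f: "1 \<le> cmod (detX x1 x2) * (576*N1*N2)" by (simp add: mult_ac)
  have "N1*N2 \<noteq> 0" using f by auto
  moreover have "0 \<le> N1*N2" using N1 N2 by simp
  ultimately have "0 < N1*N2" by (metis order_le_neq_trans)
  then have "0 < 576*N1*N2" by simp
  then show ?thesis using f by (simp add: field_simps)
qed

lemma int_bound: "\<bar>real_of_int a\<bar> \<le> N \<Longrightarrow> a \<in> {-\<lceil>N\<rceil>..\<lceil>N\<rceil>}"
  using le_of_int_ceiling[of N] by (auto simp: abs_le_iff) linarith+

lemma fin_Lset: "finite (Lset N)"
proof -
  let ?I = "{-\<lceil>N\<rceil>..\<lceil>N\<rceil>}::int set"
  let ?f = "\<lambda>(a,b,c,d). (of_int a + \<i> * of_int b) + (of_int c + \<i> * of_int d) * complex_of_real tau"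
  have "Lset N \<subseteq> ?f ` (?I \<times> ?I \<times> ?I \<times> ?I)"
  proof
    fix x assume "x \<in> Lset N"
    then obtain a b c d :: int where x: "x = (of_int a + \<i> * of_int b) + (of_int c + \<i> * of_int d) * complex_of_real tau"
      and h: "\<bar>real_of_int a\<bar> \<le> N" "\<bar>real_of_int b\<bar> \<le> N" "\<bar>real_of_int c\<bar> \<le> N" "\<bar>real_of_int d\<bar> \<le> N"
      unfolding Lset_def by blast
    have "(a,b,c,d) \<in> ?I \<times> ?I \<times> ?I \<times> ?I" using int_bound[OF h(1)] int_bound[OF h(2)] int_bound[OF h(3)] int_bound[OF h(4)] by simp
    moreover have "x = ?f (a,b,c,d)" using x by simp
    ultimately show "x \<in> ?f ` (?I \<times> ?I \<times> ?I \<times> ?I)" by (rule rev_image_eqI)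
  qed
  moreover have "finite (?f ` (?I \<times> ?I \<times> ?I \<times> ?I))" by simp
  ultimately show ?thesis by (rule finite_subset)
qed

lemma one_Lset: "1 \<le> N \<Longrightarrow> 1 \<in> Lset N"
  unfolding Lset_def
  by (rule CollectI, rule exI[of _ 1], rule exI[of _ 0], rule exI[of _ 0], rule exI[of _ 0]) simp

theorem theorem2p3:
  shows "\<exists>K>0. \<exists>N0. \<forall>N1 N2. N0 \<le> N1 \<longrightarrow> N0 \<le> N2 \<longrightarrow>
           K / (N1 * N2) \<le> decay N1 N2"
proof -
  have "\<forall>N1 N2. 1 \<le> N1 \<longrightarrow> 1 \<le> N2 \<longrightarrow> (1/576::real) / (N1 * N2) \<le> decay N1 N2"
  proof (intro allI impI)
  fix N1 N2 :: real assume n1: "1 \<le> N1" and n2: "1 \<le> N2"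
  let ?S = "{cmod (detX x1 x2) | x1 x2. x1 \<in> Lset N1 - {0} \<and> x2 \<in> Lset N2 - {0}}"
  have S: "?S = (\<lambda>(x1,x2). cmod (detX x1 x2)) ` ((Lset N1 - {0}) \<times> (Lset N2 - {0}))" by auto
  have fin: "finite ?S" unfolding S using fin_Lset by simp
  have ne: "?S \<noteq> {}" using one_Lset[OF n1] one_Lset[OF n2] by (auto intro!: exI[of _ 1])
  have "decay N1 N2 \<in> ?S" unfolding decay_def using fin ne by (rule Min_in)
  then obtain x1 x2 where "x1 \<in> Lset N1" "x1 \<noteq> 0" "x2 \<in> Lset N2" "x2 \<noteq> 0" "decay N1 N2 = cmod (detX x1 x2)" by blast
  then have "1 / (576 * N1 * N2) \<le> decay N1 N2" using det_bound by simp
  then show "1/576 / (N1 * N2) \<le> decay N1 N2" by (simp add: mult.assoc)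
  qed
  then have "\<exists>N0. \<forall>N1 N2. N0 \<le> N1 \<longrightarrow> N0 \<le> N2 \<longrightarrow> (1/576::real) / (N1 * N2) \<le> decay N1 N2" by (rule exI)
  moreover have "(0::real) < 1/576" by simp
  ultimately show ?thesis by blast
qed

end
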